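(* Let $(M,d)$ be a metric space, $Q\ge2$ an integer, and let $\mathbf P\in\mathcal A_Q(M)$ not be of the form $Q[\![P]\!]$ for any $P\in M$. Then there exist an integer $1\le R<Q$, an open neighborhood $U$ of $\mathbf P$ in $\mathcal A_Q(M)$ and continuous maps $\pi_1\colon U\to\mathcal A_R(M)$, $\pi_2\colon U\to\mathcal A_{Q-R}(M)$ such that $\mathbf S=\pi_1(\mathbf S)+\pi_2(\mathbf S)$ for every $\mathbf S\in U$, and $$\mathcal G(\mathbf S,\mathbf T)^2=\mathcal G\big(\pi_1(\mathbf S),\pi_1(\mathbf T)\big)^2+\mathcal G\big(\pi_2(\mathbf S),\pi_2(\mathbf T)\big)^2\quad\text{for all }\mathbf S,\mathbf T\in U.$$
   Context: For a metric space $(M,d)$ and a positive integer $Q$, $\mathcal A_Q(M)$ is the set of measures on $M$ of the form $\sum_{i=1}^Q[\![P_i]\!]$ with $P_i\in M$ not necessarily distinct ($[\![P]\!]$ the Dirac mass at $P$), with the metric $\mathcal G\big(\sum_i[\![A_i]\!],\sum_i[\![B_i]\!]\big)=\min_\sigma\sqrt{\sum_{i=1}^Q d(A_i,B_{\sigma(i)})^2}$, minimum over all permutations $\sigma$ of $\{1,\dots,Q\}$; the same definition is used for $\mathcal A_R(M)$, $\mathcal A_{Q-R}(M)$, and sums are sums of measures. *)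

theory Defs
  imports "HOL-Analysis.Analysis" "HOL-Library.Multiset"
begin

definition AQ :: "nat \<Rightarrow> ('a::metric_space) multiset set" where
  "AQ Q = {S. size S = Q}"

text \<open>The metric G: enumerate S and T as lists (i.e. A_i and B_sigma(i)) and
  minimise the sum of squared distances over all such enumerations.\<close>
definition Gdist :: "('a::metric_space) multiset \<Rightarrow> 'a multiset \<Rightarrow> real" where
  "Gdist S T = sqrt (Min {(\<Sum>i<size S. (dist (xs ! i) (ys ! i))^2) | xs ys.
                           mset xs = S \<and> mset ys = T})"

definition G_open :: "nat \<Rightarrow> ('a::metric_space) multiset set \<Rightarrow> bool" where
  "G_open Q U \<longleftrightarrow> U \<subseteq> AQ Q \<and>
     (\<forall>S\<in>U. \<exists>e>0. \<forall>T\<in>AQ Q. Gdist S T < e \<longrightarrow> T \<in> U)"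

definition G_continuous_on :: "('a::metric_space) multiset set \<Rightarrow> ('a multiset \<Rightarrow> 'a multiset) \<Rightarrow> bool" where
  "G_continuous_on U f \<longleftrightarrow>
     (\<forall>S\<in>U. \<forall>e>0. \<exists>d>0. \<forall>T\<in>U. Gdist S T < d \<longrightarrow> Gdist (f S) (f T) < e)"

end

theory Submission
  imports Defs
begin

definition cst :: "(('a::metric_space) \<times> 'a) list \<Rightarrow> real" where
  "cst zs = sum_list (map (\<lambda>(x,y). (dist x y)^2) zs)"

lemma cst_nonneg: "0 \<le> cst zs"
  unfolding cst_def by (rule sum_list_nonneg) auto

lemma cst_append: "cst (xs @ ys) = cst xs + cst ys"
  unfolding cst_def by simp

lemma cst_mem: "(x,y) \<in> set zs \<Longrightarrow> (dist x y)^2 \<le> cst zs"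
  unfolding cst_def by (rule member_le_sum_list) force+

lemma cst_filter: "cst (filter P zs) + cst (filter (\<lambda>z. \<not> P z) zs) = cst zs"
  unfolding cst_def by (induction zs) auto

lemma sum_zip: "length xs = length ys \<Longrightarrow>
   (\<Sum>i<length xs. (dist (xs!i) (ys!i))^2) = cst (zip xs ys)"
proof (induction xs arbitrary: ys)
  case Nil then show ?case by (simp add: cst_def)
next
  case (Cons a xs)
  then obtain b ys' where ys: "ys = b # ys'" by (cases ys) auto
  have "(\<Sum>i<length (a#xs). (dist ((a#xs)!i) (ys!i))^2) =
        (dist a b)^2 + (\<Sum>i<length xs. (dist (xs!i) (ys'!i))^2)"
    unfolding ys length_Cons sum.lessThan_Suc_shift by simp
  also have "\<dots> = cst (zip (a#xs) ys)" using Cons ys by (simp add: cst_def)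
  finally show ?case .
qed

definition Cs :: "('a::metric_space) multiset \<Rightarrow> 'a multiset \<Rightarrow> real set" where
  "Cs S T = {cst zs | zs. mset (map fst zs) = S \<and> mset (map snd zs) = T}"

lemma Gdist_Cs:
  assumes "size S = size T"
  shows "Gdist S T = sqrt (Min (Cs S T))"
proof -
  have "{(\<Sum>i<size S. (dist (xs ! i) (ys ! i))^2) | xs ys. mset xs = S \<and> mset ys = T} = Cs S T"
  proof (intro equalityI subsetI)
    fix v assume "v \<in> {(\<Sum>i<size S. (dist (xs ! i) (ys ! i))^2) | xs ys. mset xs = S \<and> mset ys = T}"
    then obtain xs ys where v: "v = (\<Sum>i<size S. (dist (xs ! i) (ys ! i))^2)"
      and m: "mset xs = S" "mset ys = T" by blast
    have l1: "length xs = size S" using m(1) by auto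
    have l2: "length ys = size S" using m(2) assms by auto
    have "v = cst (zip xs ys)" using v sum_zip[of xs ys] l1 l2 by simp
    moreover have "mset (map fst (zip xs ys)) = S" "mset (map snd (zip xs ys)) = T"
      using m l1 l2 by auto
    ultimately show "v \<in> Cs S T" unfolding Cs_def by blast
  next
    fix v assume "v \<in> Cs S T"
    then obtain zs where v: "v = cst zs" and m: "mset (map fst zs) = S" "mset (map snd zs) = T"
      unfolding Cs_def by blast
    have l: "length (map fst zs) = size S" using arg_cong[OF m(1), of size] by (simp only: size_mset)
    have "v = (\<Sum>i<size S. (dist (map fst zs ! i) (map snd zs ! i))^2)"
      using sum_zip[of "map fst zs" "map snd zs"] l v by (simp add: zip_map_fst_snd del: mset_map)
    then show "v \<in> {(\<Sum>i<size S. (dist (xs ! i) (ys ! i))^2) | xs ys. mset xs = S \<and> mset ys = T}"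
      using m by blast
  qed
  then show ?thesis unfolding Gdist_def by simp
qed

lemma Cs_finite: "finite (Cs S T)"
proof -
  have "{zs. mset (map fst zs) = S \<and> mset (map snd zs) = T} \<subseteq>
        {zs. set zs \<subseteq> set_mset S \<times> set_mset T \<and> length zs = size S}"
  proof
    fix zs assume "zs \<in> {zs. mset (map fst zs) = S \<and> mset (map snd zs) = T}"
    then have m: "mset (map fst zs) = S" "mset (map snd zs) = T" by auto
    have "set zs \<subseteq> set_mset S \<times> set_mset T"
    proof
      fix z assume "z \<in> set zs"
      then have "fst z \<in> set (map fst zs)" "snd z \<in> set (map snd zs)" by auto
      then show "z \<in> set_mset S \<times> set_mset T" using m
        by (metis mem_Sigma_iff prod.collapse set_mset_mset)
    qed
    moreover have "length zs = size S" using m by (metis length_map size_mset)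
    ultimately show "zs \<in> {zs. set zs \<subseteq> set_mset S \<times> set_mset T \<and> length zs = size S}" by auto
  qed
  then have "finite {zs. mset (map fst zs) = S \<and> mset (map snd zs) = T}"
    by (rule finite_subset) (intro finite_lists_length_eq finite_SigmaI finite_set_mset)
  then have "finite (cst ` {zs. mset (map fst zs) = S \<and> mset (map snd zs) = T})" by simp
  moreover have "Cs S T = cst ` {zs. mset (map fst zs) = S \<and> mset (map snd zs) = T}"
    unfolding Cs_def by auto
  ultimately show ?thesis by simp
qed

lemma Cs_ne: assumes "size S = size T" shows "Cs S T \<noteq> {}"
proof -
  obtain xs ys where m: "mset xs = S" "mset ys = T" using ex_mset by metis
  then have "length xs = length ys" using assms by (metis size_mset)
  then have "mset (map fst (zip xs ys)) = S" "mset (map snd (zip xs ys)) = T" using m by auto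
  then show ?thesis unfolding Cs_def by blast
qed

lemma G_sq: assumes "size S = size T" shows "(Gdist S T)^2 = Min (Cs S T)"
proof -
  have "Min (Cs S T) \<in> Cs S T" using Min_in[OF Cs_finite Cs_ne[OF assms]] .
  then have "0 \<le> Min (Cs S T)" unfolding Cs_def using cst_nonneg by auto
  then show ?thesis using Gdist_Cs[OF assms] by simp
qed

lemma G_le: assumes "size S = size T" "mset (map fst zs) = S" "mset (map snd zs) = T"
  shows "(Gdist S T)^2 \<le> cst zs"
proof -
  have "cst zs \<in> Cs S T" unfolding Cs_def using assms by blast
  then show ?thesis using G_sq[OF assms(1)] Min_le[OF Cs_finite] by simp
qed

lemma G_attain: assumes "size S = size T"
  shows "\<exists>zs. mset (map fst zs) = S \<and> mset (map snd zs) = T \<and> (Gdist S T)^2 = cst zs"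
proof -
  have "Min (Cs S T) \<in> Cs S T" using Min_in[OF Cs_finite Cs_ne[OF assms]] .
  then show ?thesis using G_sq[OF assms] unfolding Cs_def by auto
qed

lemma G_nonneg: assumes "size S = size T" shows "0 \<le> Gdist S T"
proof -
  have "Min (Cs S T) \<in> Cs S T" using Min_in[OF Cs_finite Cs_ne[OF assms]] .
  then have "0 \<le> Min (Cs S T)" unfolding Cs_def using cst_nonneg by auto
  then show ?thesis using Gdist_Cs[OF assms] by simp
qed

lemma reorder: "mset (map fst zs) = mset ss \<Longrightarrow> \<exists>zs'. mset zs' = mset zs \<and> map fst zs' = ss"
proof (induction ss arbitrary: zs)
  case Nil then show ?case by simp
next
  case (Cons s ss)
  then have "s \<in> set (map fst zs)" by (metis list.set_intros(1) set_mset_mset)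
  then obtain t where st: "(s,t) \<in> set zs" by auto
  let ?zr = "remove1 (s,t) zs"
  have "mset (map fst ?zr) = mset (map fst zs) - {#s#}"
    using st by (simp add: image_mset_Diff)
  also have "\<dots> = mset ss" using Cons.prems by simp
  finally obtain zs'' where z: "mset zs'' = mset ?zr" "map fst zs'' = ss" using Cons.IH by blast
  have "mset ((s,t) # zs'') = mset zs" using z st by simp
  then show ?case using z by (intro exI[of _ "(s,t)#zs''"]) simp
qed

lemma G_small:
  assumes "size S = size T" "Gdist S T < e" "mset ss = S"
  shows "\<exists>ts. mset ts = T \<and> length ts = length ss \<and> (\<forall>i<length ss. dist (ss!i) (ts!i) < e)"
proof -
  obtain zs where z: "mset (map fst zs) = S" "mset (map snd zs) = T" "(Gdist S T)^2 = cst zs"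
    using G_attain[OF assms(1)] by blast
  obtain zs' where z': "mset zs' = mset zs" "map fst zs' = ss" using reorder[of zs ss] z assms by auto
  have "mset (map snd zs') = T" using z' z by (metis mset_map)
  moreover have "length (map snd zs') = length ss" using z' by (metis length_map)
  moreover have "\<forall>i<length ss. dist (ss!i) (map snd zs' ! i) < e"
  proof (intro allI impI)
    fix i assume i: "i < length ss"
    then have "zs' ! i \<in> set zs" using z' by (metis length_map nth_mem set_mset_mset)
    moreover have "zs' ! i = (ss!i, map snd zs' ! i)" using z' i
      by (metis length_map nth_map prod.collapse)
    ultimately have h1: "(dist (ss!i) (map snd zs' ! i))^2 \<le> (Gdist S T)^2"
      using cst_mem[of "ss!i" "map snd zs' ! i" zs] z(3) by simp
    have h2: "0 \<le> Gdist S T" using assms(1) by (rule G_nonneg)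
    have "dist (ss!i) (map snd zs' ! i) \<le> Gdist S T"
      using power2_le_imp_le[OF h1 h2] .
    then show "dist (ss!i) (map snd zs' ! i) < e" using assms(2) by linarith
  qed
  ultimately show ?thesis by blast
qed


lemma size_cls:
  assumes "length ss = length ps" "\<forall>i<length ps. (Pr (ss!i) \<longleftrightarrow> ps!i = p)"
  shows "size (filter_mset Pr (mset ss)) = count (mset ps) p"
proof -
  have "size (filter_mset Pr (mset ss)) = length (filter Pr ss)"
    by (metis mset_filter size_mset)
  also have "\<dots> = card {i. i < length ss \<and> Pr (ss!i)}" by (rule length_filter_conv_card)
  also have "{i. i < length ss \<and> Pr (ss!i)} = {i. i < length ps \<and> (=) p (ps!i)}"
    using assms by auto
  also have "card \<dots> = length (filter ((=) p) ps)" by (rule length_filter_conv_card[symmetric])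
  also have "\<dots> = count (mset ps) p" by (simp add: count_mset count_list_eq_length_filter)
  finally show ?thesis .
qed

lemma filter_fst_map:
  "mset (map fst (filter (\<lambda>z. Pr (fst z)) zs)) = filter_mset Pr (mset (map fst zs))"
  by (induction zs) auto

lemma filter_snd_map:
  "mset (map snd (filter (\<lambda>z. Pr (snd z)) zs)) = filter_mset Pr (mset (map snd zs))"
  by (induction zs) auto

lemma pyth:
  fixes S T :: "('a::metric_space) multiset"
  assumes ss: "mset ss = S" and ts: "mset ts = T" and l: "length ss = n" "length ts = n"
    and close: "\<forall>i<n. dist (ss!i) (ts!i) \<le> \<delta>"
    and clS: "\<forall>x\<in>#S. (Pr x \<longrightarrow> dist p x < \<epsilon>) \<and> (\<not> Pr x \<longrightarrow> c - \<epsilon> < dist p x)"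
    and clT: "\<forall>x\<in>#T. (Pr x \<longrightarrow> dist p x < \<epsilon>) \<and> (\<not> Pr x \<longrightarrow> c - \<epsilon> < dist p x)"
    and small: "real n * \<delta>^2 \<le> (c - 2*\<epsilon>)^2" and nn: "0 \<le> c - 2*\<epsilon>" and d0: "0 \<le> \<delta>"
    and sz: "size (filter_mset Pr S) = size (filter_mset Pr T)"
  shows "(Gdist S T)^2 = (Gdist (filter_mset Pr S) (filter_mset Pr T))^2
           + (Gdist (filter_mset (\<lambda>x. \<not> Pr x) S) (filter_mset (\<lambda>x. \<not> Pr x) T))^2"
proof -
  let ?S1 = "filter_mset Pr S" and ?T1 = "filter_mset Pr T"
  let ?S2 = "filter_mset (\<lambda>x. \<not> Pr x) S" and ?T2 = "filter_mset (\<lambda>x. \<not> Pr x) T"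
  have szST: "size S = size T" using ss ts l by auto
  have pS: "S = ?S1 + ?S2" and pT: "T = ?T1 + ?T2" by (rule multiset_partition)+
  have sz2: "size ?S2 = size ?T2"
  proof -
    have "size S = size ?S1 + size ?S2" using pS by (metis size_union)
    moreover have "size T = size ?T1 + size ?T2" using pT by (metis size_union)
    ultimately show ?thesis using sz szST by simp
  qed
  obtain zs where z: "mset (map fst zs) = S" "mset (map snd zs) = T" "(Gdist S T)^2 = cst zs"
    using G_attain[OF szST] by blast
  have idb: "(Gdist S T)^2 \<le> real n * \<delta>^2"
  proof -
    have "(Gdist S T)^2 \<le> cst (zip ss ts)"
      using G_le[OF szST, of "zip ss ts"] ss ts l by simp
    also have "\<dots> = (\<Sum>i<n. (dist (ss!i) (ts!i))^2)" using sum_zip[of ss ts] l by simp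
    also have "\<dots> \<le> (\<Sum>i<n. \<delta>^2)"
      by (intro sum_mono power_mono) (use close in auto)
    finally show ?thesis by simp
  qed
  have noncross: "\<forall>z\<in>set zs. Pr (fst z) \<longleftrightarrow> Pr (snd z)"
  proof (rule ccontr)
    assume "\<not> ?thesis"
    then obtain w where w: "w \<in> set zs" "\<not> (Pr (fst w) \<longleftrightarrow> Pr (snd w))" by blast
    obtain x y where "w = (x,y)" by (cases w)
    then have xy: "(x,y) \<in> set zs" "Pr x \<noteq> Pr y" using w by auto
    have xS: "x \<in># S" using xy(1) z(1) by (metis fst_conv image_eqI set_map set_mset_mset)
    have yT: "y \<in># T" using xy(1) z(2) by (metis snd_conv image_eqI set_map set_mset_mset)
    have tri1: "dist p y \<le> dist p x + dist x y" by (rule dist_triangle)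
    have tri2: "dist p x \<le> dist p y + dist x y" using dist_triangle[of p x y] by (simp add: dist_commute)
    have "c - 2*\<epsilon> < dist x y"
    proof (cases "Pr x")
      case True
      then have "\<not> Pr y" using xy by simp
      then show ?thesis using True clS xS clT yT tri1 by force
    next
      case False
      then have "Pr y" using xy by simp
      then show ?thesis using False clS xS clT yT tri2 by force
    qed
    then have "(c - 2*\<epsilon>)^2 < (dist x y)^2" using nn by (simp add: power_strict_mono)
    also have "\<dots> \<le> cst zs" using cst_mem[OF xy(1)] .
    finally show False using z(3) idb small by linarith
  qed
  define zs1 where "zs1 = filter (\<lambda>z. Pr (fst z)) zs"
  define zs2 where "zs2 = filter (\<lambda>z. \<not> Pr (fst z)) zs"
  have zs1s: "zs1 = filter (\<lambda>z. Pr (snd z)) zs" unfolding zs1_def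
    by (rule filter_cong) (use noncross in auto)
  have zs2s: "zs2 = filter (\<lambda>z. \<not> Pr (snd z)) zs" unfolding zs2_def
    by (rule filter_cong) (use noncross in auto)
  have m1: "mset (map fst zs1) = ?S1" "mset (map snd zs1) = ?T1"
    using filter_fst_map[of Pr zs] filter_snd_map[of Pr zs] z zs1s unfolding zs1_def by simp_all
  have m2: "mset (map fst zs2) = ?S2" "mset (map snd zs2) = ?T2"
    using filter_fst_map[of "\<lambda>x. \<not> Pr x" zs] filter_snd_map[of "\<lambda>x. \<not> Pr x" zs] z zs2s
    unfolding zs2_def by simp_all
  have "cst zs1 + cst zs2 = cst zs" unfolding zs1_def zs2_def by (rule cst_filter)
  moreover have "(Gdist ?S1 ?T1)^2 \<le> cst zs1" using G_le[OF sz m1] .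
  moreover have "(Gdist ?S2 ?T2)^2 \<le> cst zs2" using G_le[OF sz2 m2] .
  ultimately have ge: "(Gdist ?S1 ?T1)^2 + (Gdist ?S2 ?T2)^2 \<le> (Gdist S T)^2" using z(3) by linarith
  obtain w1 where w1: "mset (map fst w1) = ?S1" "mset (map snd w1) = ?T1" "(Gdist ?S1 ?T1)^2 = cst w1"
    using G_attain[OF sz] by blast
  obtain w2 where w2: "mset (map fst w2) = ?S2" "mset (map snd w2) = ?T2" "(Gdist ?S2 ?T2)^2 = cst w2"
    using G_attain[OF sz2] by blast
  have "mset (map fst (w1 @ w2)) = S" using w1 w2 pS by (metis map_append mset_append)
  moreover have "mset (map snd (w1 @ w2)) = T" using w1 w2 pT by (metis map_append mset_append)
  ultimately have "(Gdist S T)^2 \<le> cst (w1 @ w2)" using G_le[OF szST] by blast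
  then have "(Gdist S T)^2 \<le> (Gdist ?S1 ?T1)^2 + (Gdist ?S2 ?T2)^2" using w1(3) w2(3) cst_append[of w1 w2] by linarith
  then show ?thesis using ge by linarith
qed


lemma cls:
  assumes l: "length ss = length ps" and cl: "\<forall>i<length ps. dist (ss!i) (ps!i) < \<epsilon>"
    and far: "\<forall>x\<in>set ps. x \<noteq> p \<longrightarrow> c \<le> dist p x" and e0: "0 < \<epsilon>" and ec: "4*\<epsilon> \<le> c"
  shows "\<forall>i<length ps. (dist p (ss!i) < c/2 \<longleftrightarrow> ps!i = p) \<and> (dist p (ss!i) < c/2 \<longrightarrow> dist p (ss!i) < \<epsilon>)
          \<and> (\<not> dist p (ss!i) < c/2 \<longrightarrow> c - \<epsilon> < dist p (ss!i))"
proof (intro allI impI)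
  fix i assume i: "i < length ps"
  show "(dist p (ss!i) < c/2 \<longleftrightarrow> ps!i = p) \<and> (dist p (ss!i) < c/2 \<longrightarrow> dist p (ss!i) < \<epsilon>)
          \<and> (\<not> dist p (ss!i) < c/2 \<longrightarrow> c - \<epsilon> < dist p (ss!i))"
  proof (cases "ps!i = p")
    case True
    have "dist (ss!i) (ps!i) < \<epsilon>" using cl i by simp
    then have "dist p (ss!i) < \<epsilon>" using True by (simp add: dist_commute)
    then show ?thesis using True e0 ec by auto
  next
    case False
    then have "c \<le> dist p (ps!i)" using far i by auto
    moreover have "dist p (ps!i) \<le> dist p (ss!i) + dist (ss!i) (ps!i)" by (rule dist_triangle)
    ultimately have "c - \<epsilon> < dist p (ss!i)" using cl i by force
    then show ?thesis using False e0 ec by auto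
  qed
qed

lemma not_repl:
  assumes "\<not> (\<exists>p. P = replicate_mset Q p)" "size P = Q" "p \<in># P"
  shows "\<exists>q\<in>#P. q \<noteq> p"
proof (rule ccontr)
  assume "\<not> ?thesis"
  then have "\<forall>q\<in>#P. q = p" by auto
  then have "filter_mset (\<lambda>y. y = p) P = P" by (simp add: filter_mset_eq_conv)
  then have "P = replicate_mset (count P p) p" by (metis filter_eq_replicate_mset)
  moreover then have "count P p = Q" using assms(2) by (metis size_replicate_mset)
  ultimately show False using assms(1) by metis
qed

theorem theorem3p1:
  fixes P :: "('a::metric_space) multiset" and Q :: nat
  assumes "Q \<ge> 2" and "P \<in> AQ Q" and "\<not> (\<exists>p. P = replicate_mset Q p)"
  shows "\<exists>R U \<pi>1 \<pi>2. 1 \<le> R \<and> R < Q \<and> G_open Q U \<and> P \<in> U \<and>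
     \<pi>1 ` U \<subseteq> AQ R \<and> \<pi>2 ` U \<subseteq> AQ (Q - R) \<and>
     G_continuous_on U \<pi>1 \<and> G_continuous_on U \<pi>2 \<and>
     (\<forall>S\<in>U. S = \<pi>1 S + \<pi>2 S) \<and>
     (\<forall>S\<in>U. \<forall>T\<in>U. (Gdist S T)^2 = (Gdist (\<pi>1 S) (\<pi>1 T))^2 + (Gdist (\<pi>2 S) (\<pi>2 T))^2)"
proof -
  have szP: "size P = Q" using assms(2) unfolding AQ_def by simp
  obtain ps where ps: "mset ps = P" using ex_mset by blast
  have lps: "length ps = Q" using ps szP by auto
  have "P \<noteq> {#}" using szP assms(1) by auto
  then obtain p where pP: "p \<in># P" by blast
  obtain q where qP: "q \<in># P" and qp: "q \<noteq> p" using not_repl[OF assms(3) szP pP] by blast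
  define R where "R = count P p"
  have R1: "1 \<le> R" using pP unfolding R_def by (simp add: Suc_le_eq)
  have RQ: "R < Q"
  proof -
    have "P = filter_mset (\<lambda>y. y = p) P + filter_mset (\<lambda>y. \<not> y = p) P" by (rule multiset_partition)
    then have "size P = R + size (filter_mset (\<lambda>y. \<not> y = p) P)"
      unfolding R_def by (metis filter_eq_replicate_mset size_replicate_mset size_union)
    moreover have "q \<in># filter_mset (\<lambda>y. \<not> y = p) P" using qP qp by simp
    then have "size (filter_mset (\<lambda>y. \<not> y = p) P) > 0" by (metis empty_iff set_mset_empty size_eq_0_iff_empty gr0I)
    ultimately show ?thesis using szP by linarith
  qed
  define D where "D = dist p ` {x \<in> set_mset P. x \<noteq> p}"
  have Dfin: "finite D" unfolding D_def by simp
  have Dne: "D \<noteq> {}" unfolding D_def using qP qp by blast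
  define c where "c = Min D"
  have c0: "0 < c" unfolding c_def using Min_in[OF Dfin Dne] unfolding D_def by auto
  have far: "\<forall>x\<in>set ps. x \<noteq> p \<longrightarrow> c \<le> dist p x"
    unfolding c_def using Min_le[OF Dfin] ps unfolding D_def by auto
  define \<epsilon> where "\<epsilon> = c / (4 * (real Q + 1))"
  have e0: "0 < \<epsilon>" unfolding \<epsilon>_def using c0 by simp
  have ec: "4 * \<epsilon> \<le> c" unfolding \<epsilon>_def using c0 by (simp add: field_simps)
  have small: "real Q * (2*\<epsilon>)^2 \<le> (c - 2*\<epsilon>)^2"
  proof -
    have k: "1 \<le> real Q + 1" by simp
    have "2*\<epsilon> \<le> c/2" using ec by simp
    then have "(c/2)^2 \<le> (c - 2*\<epsilon>)^2" using c0 by (intro power_mono) auto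
    moreover have "real Q * (2*\<epsilon>)^2 \<le> (c/2)^2"
    proof -
      have "real Q * (2*\<epsilon>)^2 = (c/2)^2 * (real Q / (real Q + 1)^2)"
      proof -
        have aux: "x * (2*(c/(4*k)))^2 = (c/2)^2 * (x / k^2)" if "0 < k" for k x :: real
          using that by (simp add: field_simps power2_eq_square)
        show ?thesis unfolding \<epsilon>_def by (rule aux) simp
      qed
      also have "\<dots> \<le> (c/2)^2 * 1"
      proof (rule mult_left_mono)
        have "real Q \<le> (real Q + 1)^2" by (simp add: power2_eq_square algebra_simps)
        then show "real Q / (real Q + 1)^2 \<le> 1" by simp
      qed simp
      finally show ?thesis by simp
    qed
    ultimately show ?thesis by linarith
  qed
  define Pr where "Pr = (\<lambda>x. dist p x < c/2)"
  define U where "U = {S \<in> AQ Q. \<exists>ss. mset ss = S \<and> (\<forall>i<Q. dist (ss!i) (ps!i) < \<epsilon>)}"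
  define \<pi>1 where "\<pi>1 = (\<lambda>S. filter_mset Pr S)"
  define \<pi>2 where "\<pi>2 = (\<lambda>S. filter_mset (\<lambda>x. \<not> Pr x) S)"
  have Uinfo: "\<exists>ss. mset ss = S \<and> length ss = Q \<and> (\<forall>i<Q. dist (ss!i) (ps!i) < \<epsilon>)
     \<and> (\<forall>i<Q. (Pr (ss!i) \<longleftrightarrow> ps!i = p))
     \<and> (\<forall>x\<in>#S. (Pr x \<longrightarrow> dist p x < \<epsilon>) \<and> (\<not> Pr x \<longrightarrow> c - \<epsilon> < dist p x))"
    if SU: "S \<in> U" for S
  proof -
    obtain ss where ss: "mset ss = S" "\<forall>i<Q. dist (ss!i) (ps!i) < \<epsilon>" "size S = Q"
      using SU unfolding U_def AQ_def by blast
    have l: "length ss = Q" using ss by auto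
    have C: "\<forall>i<length ps. (Pr (ss!i) \<longleftrightarrow> ps!i = p) \<and> (Pr (ss!i) \<longrightarrow> dist p (ss!i) < \<epsilon>)
          \<and> (\<not> Pr (ss!i) \<longrightarrow> c - \<epsilon> < dist p (ss!i))"
      unfolding Pr_def using cls[of ss ps \<epsilon> p c] l lps ss(2) far e0 ec by simp
    have "\<forall>x\<in>#S. (Pr x \<longrightarrow> dist p x < \<epsilon>) \<and> (\<not> Pr x \<longrightarrow> c - \<epsilon> < dist p x)"
    proof
      fix x assume "x \<in># S"
      then obtain i where "i < Q" "x = ss!i" using ss(1) l by (metis in_set_conv_nth set_mset_mset)
      then show "(Pr x \<longrightarrow> dist p x < \<epsilon>) \<and> (\<not> Pr x \<longrightarrow> c - \<epsilon> < dist p x)" using C lps by simp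
    qed
    then show ?thesis using ss l C lps by auto
  qed
  have sz1: "size (\<pi>1 S) = R" if SU: "S \<in> U" for S
  proof -
    obtain ss where "mset ss = S" "length ss = Q" "\<forall>i<Q. (Pr (ss!i) \<longleftrightarrow> ps!i = p)"
      using Uinfo[OF SU] by blast
    then show ?thesis unfolding \<pi>1_def R_def using size_cls[of ss ps Pr p] lps ps by simp
  qed
  have part: "S = \<pi>1 S + \<pi>2 S" for S unfolding \<pi>1_def \<pi>2_def by (rule multiset_partition)
  have sz2: "size (\<pi>2 S) = Q - R" if SU: "S \<in> U" for S
  proof -
    have "size S = Q" using SU unfolding U_def AQ_def by simp
    then show ?thesis using sz1[OF SU] part[of S] by (metis add_diff_cancel_left' size_union)
  qed
  have PY: "(Gdist S T)^2 = (Gdist (\<pi>1 S) (\<pi>1 T))^2 + (Gdist (\<pi>2 S) (\<pi>2 T))^2"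
    if SU: "S \<in> U" and TU: "T \<in> U" for S T
  proof -
    obtain ss where ss: "mset ss = S" "length ss = Q" "\<forall>i<Q. dist (ss!i) (ps!i) < \<epsilon>"
       "\<forall>x\<in>#S. (Pr x \<longrightarrow> dist p x < \<epsilon>) \<and> (\<not> Pr x \<longrightarrow> c - \<epsilon> < dist p x)"
      using Uinfo[OF SU] by blast
    obtain ts where ts: "mset ts = T" "length ts = Q" "\<forall>i<Q. dist (ts!i) (ps!i) < \<epsilon>"
       "\<forall>x\<in>#T. (Pr x \<longrightarrow> dist p x < \<epsilon>) \<and> (\<not> Pr x \<longrightarrow> c - \<epsilon> < dist p x)"
      using Uinfo[OF TU] by blast
    have close: "\<forall>i<Q. dist (ss!i) (ts!i) \<le> 2*\<epsilon>"
    proof (intro allI impI)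
      fix i assume i: "i < Q"
      have "dist (ss!i) (ts!i) \<le> dist (ss!i) (ps!i) + dist (ts!i) (ps!i)" by (rule dist_triangle2)
      then show "dist (ss!i) (ts!i) \<le> 2*\<epsilon>" using ss(3) ts(3) i by force
    qed
    have "size (filter_mset Pr S) = size (filter_mset Pr T)"
      using sz1[OF SU] sz1[OF TU] unfolding \<pi>1_def by simp
    moreover have "0 \<le> c - 2*\<epsilon>" using ec e0 by simp
    ultimately show ?thesis unfolding \<pi>1_def \<pi>2_def
      using pyth[OF ss(1) ts(1) ss(2) ts(2) close ss(4) ts(4) small] e0 by simp
  qed
  have cont: "G_continuous_on U \<pi>1 \<and> G_continuous_on U \<pi>2"
    unfolding G_continuous_on_def
  proof (intro conjI ballI allI impI)
    fix S e assume S: "S \<in> U" and e: "(0::real) < e"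
    show "\<exists>d>0. \<forall>T\<in>U. Gdist S T < d \<longrightarrow> Gdist (\<pi>1 S) (\<pi>1 T) < e"
    proof (intro exI[of _ e] conjI ballI impI e)
      fix T assume T: "T \<in> U" and d: "Gdist S T < e"
      have "(Gdist (\<pi>1 S) (\<pi>1 T))^2 \<le> (Gdist S T)^2" using PY[OF S T] by simp
      moreover have "0 \<le> Gdist S T"
      proof (rule G_nonneg)
        show "size S = size T" using S T unfolding U_def AQ_def by simp
      qed
      ultimately have "Gdist (\<pi>1 S) (\<pi>1 T) \<le> Gdist S T"
        by (rule power2_le_imp_le)
      then show "Gdist (\<pi>1 S) (\<pi>1 T) < e" using d by linarith
    qed
  next
    fix S e assume S: "S \<in> U" and e: "(0::real) < e"
    show "\<exists>d>0. \<forall>T\<in>U. Gdist S T < d \<longrightarrow> Gdist (\<pi>2 S) (\<pi>2 T) < e"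
    proof (intro exI[of _ e] conjI ballI impI e)
      fix T assume T: "T \<in> U" and d: "Gdist S T < e"
      have "(Gdist (\<pi>2 S) (\<pi>2 T))^2 \<le> (Gdist S T)^2" using PY[OF S T] by simp
      moreover have "0 \<le> Gdist S T"
      proof (rule G_nonneg)
        show "size S = size T" using S T unfolding U_def AQ_def by simp
      qed
      ultimately have "Gdist (\<pi>2 S) (\<pi>2 T) \<le> Gdist S T"
        by (rule power2_le_imp_le)
      then show "Gdist (\<pi>2 S) (\<pi>2 T) < e" using d by linarith
    qed
  qed
  have PU: "P \<in> U" unfolding U_def using assms(2) ps e0 by auto
  have op: "G_open Q U"
    unfolding G_open_def
  proof (intro conjI ballI)
    show "U \<subseteq> AQ Q" unfolding U_def by auto
  next
    fix S assume S: "S \<in> U"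
    obtain ss where ss: "mset ss = S" "length ss = Q" "\<forall>i<Q. dist (ss!i) (ps!i) < \<epsilon>"
      using Uinfo[OF S] by blast
    define E where "E = (\<lambda>i. dist (ss!i) (ps!i)) ` {..<Q}"
    have Efin: "finite E" and Ene: "E \<noteq> {}" unfolding E_def using assms(1) by (auto simp: lessThan_empty_iff)
    define m where "m = Max E"
    have mlt: "m < \<epsilon>" unfolding m_def using Max_in[OF Efin Ene] ss(3) unfolding E_def by auto
    have mge: "\<forall>i<Q. dist (ss!i) (ps!i) \<le> m" unfolding m_def E_def using Efin E_def by auto
    show "\<exists>e>0. \<forall>T\<in>AQ Q. Gdist S T < e \<longrightarrow> T \<in> U"
    proof (intro exI[of _ "\<epsilon> - m"] conjI ballI impI)
      show "0 < \<epsilon> - m" using mlt by simp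
    next
      fix T assume T: "T \<in> AQ Q" and d: "Gdist S T < \<epsilon> - m"
      have szST: "size S = size T" using S T unfolding U_def AQ_def by simp
      obtain ts where ts: "mset ts = T" "length ts = length ss"
        "\<forall>i<length ss. dist (ss!i) (ts!i) < \<epsilon> - m"
        using G_small[OF szST d ss(1)] by blast
      have "\<forall>i<Q. dist (ts!i) (ps!i) < \<epsilon>"
      proof (intro allI impI)
        fix i assume i: "i < Q"
        have "dist (ts!i) (ps!i) \<le> dist (ts!i) (ss!i) + dist (ss!i) (ps!i)" by (rule dist_triangle)
        then show "dist (ts!i) (ps!i) < \<epsilon>" using ts(3) mge i ss(2) by (force simp: dist_commute)
      qed
      then show "T \<in> U" unfolding U_def using T ts(1) by blast
    qed
  qed
  have i1: "\<pi>1 ` U \<subseteq> AQ R" using sz1 unfolding AQ_def by auto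
  have i2: "\<pi>2 ` U \<subseteq> AQ (Q - R)" using sz2 unfolding AQ_def by auto
  have pa: "\<forall>S\<in>U. S = \<pi>1 S + \<pi>2 S" using part by blast
  have py: "\<forall>S\<in>U. \<forall>T\<in>U. (Gdist S T)^2 = (Gdist (\<pi>1 S) (\<pi>1 T))^2 + (Gdist (\<pi>2 S) (\<pi>2 T))^2"
    using PY by blast
  show ?thesis
    by (rule exI[of _ R], rule exI[of _ U], rule exI[of _ \<pi>1], rule exI[of _ \<pi>2])
       (use R1 RQ op PU i1 i2 cont pa py in blast)
qed

end
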